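(* Let $k\ge 2$ be an integer, let $\chi$ be a set, and let $d_H:\chi^k\to[0,\infty)$ be an $H$-metric with parameter $\gamma$. Define $d:\chi^2\to[0,\infty)$ by $$d(p_1,p_2):=d_H(p_1,\underbrace{p_2,\ldots,p_2}_{k-1})+d_H(p_2,\underbrace{p_1,\ldots,p_1}_{k-1}).$$ Then $d$ is a metric on $\chi$ (symmetric, $d(p,q)\ge 0$ with equality iff $p=q$, and satisfying the triangle inequality), and for all $p_1,\ldots,p_k\in\chi$ and every $v\in\{p_1,\ldots,p_k\}$, $$\frac{1}{\gamma k^2}\sum_{i=1}^{k-1}\sum_{j=i+1}^{k} d(p_i,p_j)\;\le\; d_H(p_1,\ldots,p_k)\;\le\;\sum_{i=1}^k d(v,p_i).$$
   Context: For a multiset $S$ of elements of $\chi$, $elem(S)$ denotes the set of distinct elements of $S$. An $H$-metric with parameter $\gamma$ (where $\gamma$ is an integer with $1\le\gamma\le k-1$) is a function $d_H:\chi^k\to[0,\infty)$ satisfying: ($\Pi$) $d_H(p_1,\ldots,p_k)$ is invariant under permuting its arguments; ($O_D$) $d_H(p_1,\ldots,p_k)\ge 0$, with equality if and only if $p_1=\cdots=p_k$; ($\Delta_H$) for all $p_1,\ldots,p_k,a\in\chi$ and all $i\in\{1,\ldots,k\}$, $d_H(p_1,\ldots,p_k)\le d_H(p_1,\ldots,p_i,a,\ldots,a)+d_H(a,\ldots,a,p_{i+1},\ldots,p_k)$, where $a$ appears $k-i$ times in the first term and $i$ times in the second; ($\mathcal S_H$) for all $p_1,\ldots,p_k,p'_1,\ldots,p'_k\in\chi$: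 if $elem(\{p_1,\ldots,p_k\})\subsetneq elem(\{p'_1,\ldots,p'_k\})$ then $d_H(p_1,\ldots,p_k)\le d_H(p'_1,\ldots,p'_k)$, and if $elem(\{p_1,\ldots,p_k\})= elem(\{p'_1,\ldots,p'_k\})$ then $d_H(p_1,\ldots,p_k)\le \gamma\, d_H(p'_1,\ldots,p'_k)$. *)

theory Defs
  imports "HOL-Analysis.Analysis"
begin

text \<open>Points of \<chi>^k are represented as lists of length k over the type 'a
  (position i of the list is the (i+1)-st argument). elem(S) is set.\<close>

definition H_metric :: "nat \<Rightarrow> nat \<Rightarrow> ('a list \<Rightarrow> real) \<Rightarrow> bool" where
  "H_metric k \<gamma> dH \<longleftrightarrow>
     1 \<le> \<gamma> \<and> \<gamma> \<le> k - 1 \<and>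
     (\<forall>ps qs. length ps = k \<longrightarrow> mset qs = mset ps \<longrightarrow> dH qs = dH ps) \<and>
     (\<forall>ps. length ps = k \<longrightarrow> dH ps \<ge> 0 \<and>
            (dH ps = 0 \<longleftrightarrow> (\<forall>x\<in>set ps. \<forall>y\<in>set ps. x = y))) \<and>
     (\<forall>ps a i. length ps = k \<longrightarrow> 1 \<le> i \<longrightarrow> i \<le> k \<longrightarrow>
            dH ps \<le> dH (take i ps @ replicate (k - i) a) + dH (replicate i a @ drop i ps)) \<and>
     (\<forall>ps qs. length ps = k \<longrightarrow> length qs = k \<longrightarrow>
            (set ps \<subset> set qs \<longrightarrow> dH ps \<le> dH qs) \<and>
            (set ps = set qs \<longrightarrow> dH ps \<le> real \<gamma> * dH qs))"

definition induced_dist :: "nat \<Rightarrow> ('a list \<Rightarrow> real) \<Rightarrow> 'a \<Rightarrow> 'a \<Rightarrow> real" where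
  "induced_dist k dH p q = dH (p # replicate (k - 1) q) + dH (q # replicate (k - 1) p)"

end

theory Submission
  imports Defs
begin

lemma Hm_parts:
  assumes "H_metric k \<gamma> dH"
  shows "1 \<le> \<gamma>"
    and "\<forall>ps qs. length ps = k \<longrightarrow> mset qs = mset ps \<longrightarrow> dH qs = dH ps"
    and "\<forall>ps. length ps = k \<longrightarrow> dH ps \<ge> 0 \<and>
            (dH ps = 0 \<longleftrightarrow> (\<forall>x\<in>set ps. \<forall>y\<in>set ps. x = y))"
    and "\<forall>ps a i. length ps = k \<longrightarrow> 1 \<le> i \<longrightarrow> i \<le> k \<longrightarrow>
            dH ps \<le> dH (take i ps @ replicate (k - i) a) + dH (replicate i a @ drop i ps)"
    and "\<forall>ps qs. length ps = k \<longrightarrow> length qs = k \<longrightarrow>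
            (set ps \<subset> set qs \<longrightarrow> dH ps \<le> dH qs) \<and>
            (set ps = set qs \<longrightarrow> dH ps \<le> real \<gamma> * dH qs)"
  using assms unfolding H_metric_def by - (elim conjE, assumption)+

lemma Hm_perm: "H_metric k \<gamma> dH \<Longrightarrow> length ps = k \<Longrightarrow> mset qs = mset ps \<Longrightarrow> dH qs = dH ps"
  using Hm_parts(2) by blast
lemma Hm_nonneg: "H_metric k \<gamma> dH \<Longrightarrow> length ps = k \<Longrightarrow> dH ps \<ge> 0"
  using Hm_parts(3) by blast
lemma Hm_zero: "H_metric k \<gamma> dH \<Longrightarrow> length ps = k \<Longrightarrow> dH ps = 0 \<longleftrightarrow> (\<forall>x\<in>set ps. \<forall>y\<in>set ps. x = y)"
  using Hm_parts(3) by blast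
lemma Hm_tri: "H_metric k \<gamma> dH \<Longrightarrow> length ps = k \<Longrightarrow> 1 \<le> i \<Longrightarrow> i \<le> k \<Longrightarrow>
   dH ps \<le> dH (take i ps @ replicate (k - i) a) + dH (replicate i a @ drop i ps)"
  using Hm_parts(4) by blast
lemma Hm_sub: "H_metric k \<gamma> dH \<Longrightarrow> length ps = k \<Longrightarrow> length qs = k \<Longrightarrow> set ps \<subset> set qs \<Longrightarrow> dH ps \<le> dH qs"
  using Hm_parts(5) by blast
lemma Hm_eq: "H_metric k \<gamma> dH \<Longrightarrow> length ps = k \<Longrightarrow> length qs = k \<Longrightarrow> set ps = set qs \<Longrightarrow> dH ps \<le> real \<gamma> * dH qs"
  using Hm_parts(5) by blast
lemma Hm_gam: "H_metric k \<gamma> dH \<Longrightarrow> 1 \<le> \<gamma>"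
  using Hm_parts(1) by blast

lemma tri1:
  assumes "H_metric k \<gamma> dH" "k \<ge> 2"
  shows "dH (p # replicate (k-1) r) \<le> dH (p # replicate (k-1) q) + dH (q # replicate (k-1) r)"
proof -
  have "dH (p # replicate (k-1) r) \<le> dH (take 1 (p # replicate (k-1) r) @ replicate (k - 1) q)
      + dH (replicate 1 q @ drop 1 (p # replicate (k-1) r))"
    by (rule Hm_tri[OF assms(1)]) (use assms(2) in auto)
  then show ?thesis by simp
qed

lemma upper_aux:
  assumes "H_metric k \<gamma> dH" "k \<ge> 1"
  shows "length xs \<le> k \<Longrightarrow> dH (xs @ replicate (k - length xs) v) \<le> (\<Sum>x\<leftarrow>xs. dH (x # replicate (k-1) v))"
proof (induction xs)
  case Nil
  have "dH (replicate k v) = 0" using Hm_zero[OF assms(1), of "replicate k v"] by simp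
  then show ?case by simp
next
  case (Cons x xs)
  let ?L = "x # (xs @ replicate (k - Suc (length xs)) v)"
  have "dH ?L \<le> dH (take 1 ?L @ replicate (k - 1) v) + dH (replicate 1 v @ drop 1 ?L)"
    by (rule Hm_tri[OF assms(1)]) (use Cons.prems assms(2) in auto)
  moreover have "dH (replicate 1 v @ drop 1 ?L) = dH (xs @ replicate (k - length xs) v)"
  proof (rule Hm_perm[OF assms(1)])
    show "length (xs @ replicate (k - length xs) v) = k" using Cons.prems by simp
    have "k - length xs = Suc (k - Suc (length xs))" using Cons.prems by simp
    then show "mset (replicate 1 v @ drop 1 ?L) = mset (xs @ replicate (k - length xs) v)"
      by simp
  qed
  ultimately show ?case using Cons by simp
qed

lemma pair_bound:
  assumes "H_metric k \<gamma> dH" "k \<ge> 2" "length ps = k" "x \<in> set ps" "y \<in> set ps"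
  shows "dH (x # replicate (k-1) y) \<le> real \<gamma> * dH ps"
proof -
  let ?q = "x # replicate (k-1) y"
  have lq: "length ?q = k" using assms by simp
  have sq: "set ?q \<subseteq> set ps" using assms by (cases "k - 1") auto
  have g: "real \<gamma> \<ge> 1" using Hm_gam[OF assms(1)] by simp
  have nn: "dH ps \<ge> 0" using Hm_nonneg[OF assms(1,3)] .
  show ?thesis
  proof (cases "set ?q = set ps")
    case True then show ?thesis using Hm_eq[OF assms(1) lq assms(3)] by simp
  next
    case False
    then have "set ?q \<subset> set ps" using sq by blast
    then have "dH ?q \<le> dH ps" using Hm_sub[OF assms(1) lq assms(3)] by simp
    also have "\<dots> \<le> real \<gamma> * dH ps" using g nn by (simp add: mult_le_cancel_right1)
    finally show ?thesis .
  qed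
qed

lemma gauss_le: "2 * (\<Sum>i<k. real (k - Suc i)) \<le> real k ^ 2"
proof -
  have "(\<Sum>i<k. real (k - Suc i)) = (\<Sum>i<k. real i)"
    using sum.nat_diff_reindex[of "\<lambda>i. real i" k] by simp
  moreover have "2 * (\<Sum>i<k. real i) \<le> real k ^ 2"
    by (induction k) (auto simp: power2_eq_square algebra_simps)
  ultimately show ?thesis by simp
qed

theorem theorem1:
  fixes k \<gamma> :: nat and dH :: "'a list \<Rightarrow> real"
  assumes "k \<ge> 2" and "H_metric k \<gamma> dH"
  defines "d \<equiv> induced_dist k dH"
  shows "(\<forall>p q. d p q = d q p) \<and>
         (\<forall>p q. d p q \<ge> 0 \<and> (d p q = 0 \<longleftrightarrow> p = q)) \<and>
         (\<forall>p q r. d p r \<le> d p q + d q r) \<and>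
         (\<forall>ps v. length ps = k \<longrightarrow> v \<in> set ps \<longrightarrow>
            (1 / (real \<gamma> * real k ^ 2)) * (\<Sum>i<k. \<Sum>j\<in>{i+1..<k}. d (ps ! i) (ps ! j)) \<le> dH ps \<and>
            dH ps \<le> (\<Sum>i<k. d v (ps ! i)))"
proof (intro conjI allI impI)
  fix p q
  show "d p q = d q p" unfolding d_def induced_dist_def by simp
  have l: "length (p # replicate (k-1) q) = k" "length (q # replicate (k-1) p) = k"
    using assms(1) by auto
  have n1: "dH (p # replicate (k-1) q) \<ge> 0" "dH (q # replicate (k-1) p) \<ge> 0"
    using Hm_nonneg[OF assms(2) l(1)] Hm_nonneg[OF assms(2) l(2)] by auto
  then show "d p q \<ge> 0" unfolding d_def induced_dist_def by simp
  have km: "k - 1 \<noteq> 0" using assms(1) by simp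
  have z1: "dH (p # replicate (k-1) q) = 0 \<longleftrightarrow> p = q"
    using Hm_zero[OF assms(2) l(1)] km by auto
  show "d p q = 0 \<longleftrightarrow> p = q" unfolding d_def induced_dist_def using n1 z1 by auto
next
  fix p q r
  show "d p r \<le> d p q + d q r"
    unfolding d_def induced_dist_def
    using tri1[OF assms(2,1), of p r q] tri1[OF assms(2,1), of r p q] by simp
next
  fix ps :: "'a list" and v
  assume lp: "length ps = k" and vin: "v \<in> set ps"
  have b: "d x y \<le> 2 * real \<gamma> * dH ps" if "x \<in> set ps" "y \<in> set ps" for x y
    using pair_bound[OF assms(2,1) lp that] pair_bound[OF assms(2,1) lp that(2,1)]
    unfolding d_def induced_dist_def by simp
  have "(\<Sum>i<k. \<Sum>j\<in>{i+1..<k}. d (ps ! i) (ps ! j)) \<le> (\<Sum>i<k. \<Sum>j\<in>{i+1..<k}. 2 * real \<gamma> * dH ps)"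
    by (intro sum_mono b) (use lp in auto)
  also have "\<dots> = 2 * real \<gamma> * dH ps * (\<Sum>i<k. real (k - Suc i))"
  proof -
    have "\<And>i. (\<Sum>j\<in>{i+1..<k}. 2 * real \<gamma> * dH ps) = 2 * real \<gamma> * dH ps * real (k - Suc i)"
      by simp
    then show ?thesis by (simp only: sum_distrib_left)
  qed
  also have "\<dots> \<le> real \<gamma> * dH ps * real k ^ 2"
  proof -
    have "0 \<le> real \<gamma> * dH ps" using Hm_nonneg[OF assms(2) lp] by simp
    from mult_left_mono[OF gauss_le[of k] this]
    show ?thesis by (simp add: mult_ac)
  qed
  finally have s: "(\<Sum>i<k. \<Sum>j\<in>{i+1..<k}. d (ps ! i) (ps ! j)) \<le> real \<gamma> * real k ^ 2 * dH ps"
    by (simp add: mult_ac)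
  have pos: "real \<gamma> * real k ^ 2 > 0" using Hm_gam[OF assms(2)] assms(1) by simp
  show "(1 / (real \<gamma> * real k ^ 2)) * (\<Sum>i<k. \<Sum>j\<in>{i+1..<k}. d (ps ! i) (ps ! j)) \<le> dH ps"
  proof -
    have "(1 / (real \<gamma> * real k ^ 2)) * (\<Sum>i<k. \<Sum>j\<in>{i+1..<k}. d (ps ! i) (ps ! j))
        \<le> (1 / (real \<gamma> * real k ^ 2)) * (real \<gamma> * real k ^ 2 * dH ps)"
      using s pos by (intro mult_left_mono) auto
    also have "\<dots> = dH ps" using Hm_gam[OF assms(2)] assms(1) by simp
    finally show ?thesis .
  qed
  have "dH ps = dH (ps @ replicate (k - length ps) v)" using lp by simp
  also have "\<dots> \<le> (\<Sum>x\<leftarrow>ps. dH (x # replicate (k-1) v))"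
    by (rule upper_aux[OF assms(2)]) (use assms(1) lp in auto)
  also have "\<dots> \<le> (\<Sum>x\<leftarrow>ps. d v x)"
  proof (rule sum_list_mono)
    fix x assume "x \<in> set ps"
    have "length (v # replicate (k-1) x) = k" using assms(1) by simp
    from Hm_nonneg[OF assms(2) this]
    show "dH (x # replicate (k-1) v) \<le> d v x"
      unfolding d_def induced_dist_def by simp
  qed
  also have "\<dots> = (\<Sum>i<k. d v (ps ! i))"
    using sum_list_sum_nth[of "map (d v) ps"] lp by (simp add: atLeast0LessThan)
  finally show "dH ps \<le> (\<Sum>i<k. d v (ps ! i))" .
qed

end
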